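(* Let $n,d,d_k$ be positive integers, $X\in\mathbb{R}^{n\times d}$, $W_Q,W_K\in\mathbb{R}^{d\times d_k}$, $E\in\mathbb{R}^{n\times n}$, and let $P\in\mathbb{R}^{d\times d}$ be an orthogonal projector. Put $B=W_QW_K^\top$, $X_P=XP$, $G_Q=X^\top E X W_K/\sqrt{d_k}$, $G_K=X^\top E^\top X W_Q/\sqrt{d_k}$, and for $\eta_Q,\eta_K\ge0$ let $B^+=(W_Q-\eta_QG_Q)(W_K-\eta_KG_K)^\top$ and $\Delta Z_P=X_P P(B^+-B)P X_P^\top/\sqrt{d_k}$. Then for $S\in\{Q,K\}$, $$\|XW_SW_S^\top P\|_F\le\|X\|_F\|W_S\|_{\mathrm{op}}^2,$$ and consequently $$\|\Delta Z_P\|_F\le\frac{\|E\|_{\mathrm{op}}\|X\|_F}{d_k}\Big(\eta_Q\|W_K\|_{\mathrm{op}}^2+\eta_K\|W_Q\|_{\mathrm{op}}^2\Big)\|X_P\|_{\mathrm{op}}^2\|X_P\|_F+R_2,$$ where $R_2=\eta_Q\eta_K\|X_P\|_{\mathrm{op}}^2\|X_P\|_F^2\|E\|_{\mathrm{op}}^2\|XW_K\|_F\|XW_Q\|_F/d_k^{3/2}$.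
   Context: $\|\cdot\|_F$ is the Frobenius norm, $\|\cdot\|_{\mathrm{op}}$ the spectral norm; an orthogonal projector satisfies $P=P^\top=P^2$. *)

theory Defs
  imports "HOL-Analysis.Analysis"
begin

definition frob_norm :: "real^'n^'m \<Rightarrow> real" where
  "frob_norm A = sqrt (\<Sum>i\<in>UNIV. \<Sum>j\<in>UNIV. (A $ i $ j)^2)"

definition op_norm :: "real^'n^'m \<Rightarrow> real" where
  "op_norm A = onorm (\<lambda>x. A *v x)"

definition orth_projector :: "real^'n^'n \<Rightarrow> bool" where
  "orth_projector P \<longleftrightarrow> transpose P = P \<and> P ** P = P"

end

theory Submission
  imports Defs
begin

lemma norm_sq_vec: "(norm (x::'a::real_normed_vector^'n))^2 = (\<Sum>i\<in>UNIV. (norm (x$i))^2)"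
  by (simp add: norm_vec_def L2_set_def sum_nonneg)

lemma frob_eq_norm: "frob_norm A = norm A"
proof -
  have "(norm A)^2 = (\<Sum>i\<in>UNIV. \<Sum>j\<in>UNIV. (A $ i $ j)^2)"
    by (simp add: norm_sq_vec)
  then show ?thesis unfolding frob_norm_def by (metis norm_ge_zero real_sqrt_unique)
qed

lemma inner_adj: "inner (A *v x) (y::real^'m) = inner (x::real^'n) (transpose A *v y)"
  unfolding inner_vec_def matrix_vector_mult_def transpose_def
  apply (simp add: sum_distrib_left sum_distrib_right)
  apply (subst sum.swap)
  apply (intro sum.cong refl)
  by (simp add: mult_ac)

lemma op_bound: "norm (A *v x) \<le> op_norm A * norm x"
  unfolding op_norm_def by (rule onorm[OF matrix_vector_mul_bounded_linear])

lemma op_nonneg: "0 \<le> op_norm A"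
  unfolding op_norm_def by (rule onorm_pos_le[OF matrix_vector_mul_bounded_linear])

lemma op_le: "(\<And>x. norm (A *v x) \<le> b * norm x) \<Longrightarrow> op_norm (A::real^'n^'m) \<le> b"
  unfolding op_norm_def by (rule onorm_le)

lemma op_transpose_le: "op_norm (transpose A) \<le> op_norm (A::real^'n^'m)"
proof (rule op_le)
  fix y :: "real^'m"
  let ?z = "transpose A *v y"
  have "(norm ?z)^2 = inner ?z ?z" by (simp add: power2_norm_eq_inner)
  also have "\<dots> = inner (A *v ?z) y" using inner_adj[of "transpose A" y ?z] by (simp add: inner_commute)
  also have "\<dots> \<le> norm (A *v ?z) * norm y" by (rule Cauchy_Schwarz_ineq2[THEN order_trans[OF abs_ge_self]])
  also have "\<dots> \<le> op_norm A * norm ?z * norm y" by (simp add: op_bound mult_right_mono)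
  finally have h: "(norm ?z)^2 \<le> op_norm A * norm ?z * norm y" .
  show "norm ?z \<le> op_norm A * norm y"
  proof (cases "norm ?z = 0")
    case True then show ?thesis by (simp add: op_nonneg)
  next
    case False
    then have "0 < norm ?z" by simp
    with h show ?thesis by (simp add: power2_eq_square mult_ac)
  qed
qed

lemma op_transpose: "op_norm (transpose A) = op_norm (A::real^'n^'m)"
  using op_transpose_le[of A] op_transpose_le[of "transpose A"] by simp

lemma row_mult: "((A::real^_^_) ** B) $ i = transpose B *v (A $ i)"
  apply (simp add: vec_eq_iff matrix_matrix_mult_def matrix_vector_mult_def transpose_def)
  apply (intro allI sum.cong) by (auto simp: mult.commute)

lemma norm_mult_right: "norm ((A::real^'n^'m) ** (B::real^'p^'n)) \<le> norm A * op_norm B"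
proof -
  have "(norm (A ** B))^2 = (\<Sum>i\<in>UNIV. (norm (transpose B *v (A $ i)))^2)"
    by (simp add: norm_sq_vec row_mult)
  also have "\<dots> \<le> (\<Sum>i\<in>UNIV. (op_norm B * norm (A $ i))^2)"
    apply (rule sum_mono) apply (rule power_mono)
    using op_bound[of "transpose B"] by (auto simp: op_transpose)
  also have "\<dots> = (op_norm B * norm A)^2"
    by (simp add: norm_sq_vec power_mult_distrib sum_distrib_left)
  finally show ?thesis
    by (metis mult.commute mult_nonneg_nonneg norm_ge_zero op_nonneg power2_le_imp_le)
qed

lemma norm_transpose: "norm (transpose (A::real^'n^'m)) = norm A"
proof -
  have "frob_norm (transpose A) = frob_norm A"
    unfolding frob_norm_def transpose_def apply simp
    apply (subst sum.swap) by (rule refl)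
  then show ?thesis by (simp add: frob_eq_norm)
qed

lemma norm_mult_left: "norm ((A::real^'n^'m) ** (B::real^'p^'n)) \<le> op_norm A * norm B"
  using norm_mult_right[of "transpose B" "transpose A"]
  by (simp add: norm_transpose op_transpose matrix_transpose_mul[symmetric] mult.commute)

lemma op_mult: "op_norm ((A::real^'n^'m) ** (B::real^'p^'n)) \<le> op_norm A * op_norm B"
proof (rule op_le)
  fix x
  have "norm ((A ** B) *v x) = norm (A *v (B *v x))" by (simp add: matrix_vector_mul_assoc)
  also have "\<dots> \<le> op_norm A * norm (B *v x)" by (rule op_bound)
  also have "\<dots> \<le> op_norm A * (op_norm B * norm x)" by (rule mult_left_mono[OF op_bound op_nonneg])
  finally show "norm ((A ** B) *v x) \<le> op_norm A * op_norm B * norm x" by (simp add: mult_ac)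
qed

lemma op_le_norm: "op_norm (A::real^'n^'m) \<le> norm A"
proof (rule op_le)
  fix x :: "real^'n"
  have "(norm (A *v x))^2 = (\<Sum>i\<in>UNIV. (inner (A$i) x)^2)"
    by (simp add: norm_sq_vec matrix_vector_mult_def inner_vec_def)
  also have "\<dots> \<le> (\<Sum>i\<in>UNIV. (norm (A$i) * norm x)^2)"
    apply (rule sum_mono) 
    subgoal for i using power_mono[OF Cauchy_Schwarz_ineq2[of "A$i" x] abs_ge_zero, of 2] by simp
    done
  also have "\<dots> = (norm A * norm x)^2"
    by (simp add: norm_sq_vec power_mult_distrib sum_distrib_right)
  finally show "norm (A *v x) \<le> norm A * norm x"
    by (rule power2_le_imp_le) simp
qed

lemma op_proj: "orth_projector P \<Longrightarrow> op_norm P \<le> 1"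
proof (rule op_le)
  fix x assume a: "orth_projector P"
  have "(norm (P *v x))^2 = inner (P *v x) (P *v x)" by (simp add: power2_norm_eq_inner)
  also have "\<dots> = inner x (P *v x)" using a
    by (simp add: inner_adj orth_projector_def matrix_vector_mul_assoc)
  also have "\<dots> \<le> norm x * norm (P *v x)" by (rule Cauchy_Schwarz_ineq2[THEN order_trans[OF abs_ge_self]])
  finally have h: "(norm (P *v x))^2 \<le> norm x * norm (P *v x)" .
  show "norm (P *v x) \<le> 1 * norm x"
  proof (cases "norm (P *v x) = 0")
    case True then show ?thesis by simp
  next
    case False
    with h show ?thesis by (simp add: power2_eq_square)
  qed
qed


lemma mdiff_l: "(A::real^'n^'m) ** (B - C) = A ** B - A ** C"
  by (simp add: matrix_matrix_mult_def vec_eq_iff algebra_simps sum_subtractf)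
lemma mdiff_r: "((A::real^'n^'m) - B) ** C = A ** C - B ** C"
  by (simp add: matrix_matrix_mult_def vec_eq_iff algebra_simps sum_subtractf)
lemma madd_r: "((A::real^'n^'m) + B) ** C = A ** C + B ** C"
  by (simp add: matrix_matrix_mult_def vec_eq_iff algebra_simps sum.distrib)
lemma mscale_l: "(A::real^'n^'m) ** (c *\<^sub>R B) = c *\<^sub>R (A ** B)"
  by (simp add: matrix_scalar_ac scalar_matrix_assoc)
lemma mscale_r: "(c *\<^sub>R (A::real^'n^'m)) ** B = c *\<^sub>R (A ** B)"
  by (simp add: scalar_matrix_assoc)
lemma transpose_diff: "transpose ((A::real^'n^'m) - B) = transpose A - transpose B"
  by (simp add: transpose_def vec_eq_iff)

lemma first_part:
  assumes "orth_projector P"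
  shows "norm ((X::real^'d^'n) ** (W::real^'k^'d) ** transpose W ** P) \<le> norm X * (op_norm W)^2"
proof -
  have o1: "op_norm (W ** transpose W ** P) \<le> op_norm (W ** transpose W) * op_norm P" by (rule op_mult)
  have o2: "op_norm (W ** transpose W) \<le> op_norm W * op_norm W"
    using op_mult[of W "transpose W"] by (simp add: op_transpose)
  have o3: "op_norm P \<le> 1" by (rule op_proj[OF assms])
  have o4: "op_norm (W ** transpose W ** P) \<le> (op_norm W)^2"
  proof -
    have "op_norm (W ** transpose W) * op_norm P \<le> op_norm (W ** transpose W) * 1"
      by (rule mult_left_mono[OF o3 op_nonneg])
    then have "op_norm (W ** transpose W ** P) \<le> op_norm W * op_norm W" using o1 o2 by linarith
    then show ?thesis by (simp only: power2_eq_square)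
  qed
  have "norm (X ** W ** transpose W ** P) = norm (X ** (W ** transpose W ** P))"
    by (simp only: matrix_mul_assoc)
  also have "\<dots> \<le> norm X * op_norm (W ** transpose W ** P)" by (rule norm_mult_right)
  also have "\<dots> \<le> norm X * (op_norm W)^2" by (rule mult_left_mono[OF o4 norm_ge_zero])
  finally show ?thesis .
qed

lemma main_bound:
  fixes X :: "real^'d^'n" and W_Q W_K :: "real^'k^'d" and E :: "real^'n^'n"
    and P :: "real^'d^'d" and eta_Q eta_K :: real
  assumes proj: "orth_projector P" and eQ: "eta_Q \<ge> 0" and eK: "eta_K \<ge> 0"
    and dk: "dk = real CARD('k)"
    and B: "B = W_Q ** transpose W_K"
    and XP: "XP = X ** P"
    and GQ: "G_Q = (1 / sqrt dk) *\<^sub>R (transpose X ** E ** X ** W_K)"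
    and GK: "G_K = (1 / sqrt dk) *\<^sub>R (transpose X ** transpose E ** X ** W_Q)"
    and Bp: "Bp = (W_Q - eta_Q *\<^sub>R G_Q) ** transpose (W_K - eta_K *\<^sub>R G_K)"
    and DZ: "DZ = (1 / sqrt dk) *\<^sub>R (XP ** P ** (Bp - B) ** P ** transpose XP)"
    and R2: "R2 = eta_Q * eta_K * (op_norm XP)^2 * (frob_norm XP)^2 * (op_norm E)^2
                  * frob_norm (X ** W_K) * frob_norm (X ** W_Q) / dk powr (3/2)"
  shows "frob_norm DZ \<le> op_norm E * frob_norm X / dk
               * (eta_Q * (op_norm W_K)^2 + eta_K * (op_norm W_Q)^2)
               * (op_norm XP)^2 * frob_norm XP + R2"
proof -
  have PT: "transpose P = P" and PP: "P ** P = P" using proj by (auto simp: orth_projector_def)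
  have PP': "A ** P ** P = A ** P" for A :: "real^'d^'a" by (metis PP matrix_mul_assoc)
  have dkpos: "dk > 0" using dk by simp
  define s where "s = 1 / sqrt dk"
  define a where "a = eta_Q * s"
  define b where "b = eta_K * s"
  define M where "M = transpose X ** E ** X"
  have XPT: "transpose XP = P ** transpose X" using XP PT by (simp add: matrix_transpose_mul)
  have GKT: "transpose G_K = s *\<^sub>R (transpose W_Q ** M)"
    unfolding GK M_def s_def by (simp add: transpose_scalar matrix_transpose_mul matrix_mul_assoc)
  have GQ': "G_Q = s *\<^sub>R (M ** W_K)" unfolding GQ M_def s_def by simp
  have BB: "Bp - B = - (b *\<^sub>R (W_Q ** (transpose W_Q ** M))) - a *\<^sub>R (M ** W_K ** transpose W_K)
        + (a * b) *\<^sub>R (M ** W_K ** (transpose W_Q ** M))"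
    unfolding Bp B transpose_diff transpose_scalar GKT GQ' a_def b_def
    by (simp add: mdiff_l mdiff_r mscale_l mscale_r algebra_simps)
  define T1 where "T1 = XP ** (M ** W_K ** transpose W_K) ** transpose XP"
  define T2 where "T2 = XP ** (W_Q ** (transpose W_Q ** M)) ** transpose XP"
  define T3 where "T3 = XP ** (M ** W_K ** (transpose W_Q ** M)) ** transpose XP"
  have DZ': "DZ = s *\<^sub>R (- (b *\<^sub>R T2) - a *\<^sub>R T1 + (a * b) *\<^sub>R T3)"
  proof -
    have hXP: "XP ** P ** (Bp - B) ** P ** transpose XP = XP ** (Bp - B) ** transpose XP"
      unfolding XPT unfolding XP by (simp add: matrix_mul_assoc PP')
    show ?thesis unfolding DZ s_def[symmetric] hXP unfolding BB T1_def T2_def T3_def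
      by (simp add: mdiff_l mdiff_r madd_r matrix_add_ldistrib mscale_l mscale_r algebra_simps)
  qed
  define c where "c = op_norm XP"
  define f where "f = norm XP"
  define e where "e = op_norm E"
  have c0: "0 \<le> c" and e0: "0 \<le> e" and cf: "c \<le> f"
    unfolding c_def e_def f_def by (auto simp: op_nonneg op_le_norm)
  have opXPT: "op_norm (transpose XP) = c" unfolding c_def by (rule op_transpose)
  have opA: "op_norm (XP ** transpose XP ** E) \<le> c^2 * e"
  proof -
    have "op_norm (XP ** transpose XP ** E) \<le> op_norm (XP ** transpose XP) * e"
      unfolding e_def by (rule op_mult)
    also have "\<dots> \<le> (c * c) * e"
      apply (rule mult_right_mono[OF _ e0])
      using op_mult[of XP "transpose XP"] opXPT c_def by simp
    finally show ?thesis by (simp add: power2_eq_square)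
  qed
  have opA': "op_norm (E ** XP ** transpose XP) \<le> c^2 * e"
  proof -
    have "op_norm (E ** XP ** transpose XP) = op_norm (E ** (XP ** transpose XP))"
      by (simp add: matrix_mul_assoc)
    also have "\<dots> \<le> e * op_norm (XP ** transpose XP)"
      unfolding e_def by (rule op_mult)
    also have "\<dots> \<le> e * (c * c)"
      apply (rule mult_left_mono[OF _ e0])
      using op_mult[of XP "transpose XP"] opXPT c_def by simp
    finally show ?thesis by (simp add: power2_eq_square mult_ac)
  qed
  define YK where "YK = X ** W_K ** transpose W_K ** P"
  define YQ where "YQ = X ** W_Q ** transpose W_Q ** P"
  have YK: "norm YK \<le> norm X * (op_norm W_K)^2" unfolding YK_def by (rule first_part[OF proj])
  have YQ: "norm YQ \<le> norm X * (op_norm W_Q)^2" unfolding YQ_def by (rule first_part[OF proj])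
  have T1: "norm T1 \<le> c^3 * e * (norm X * (op_norm W_K)^2)"
  proof -
    have "T1 = XP ** transpose XP ** E ** YK ** transpose XP"
      unfolding T1_def YK_def XPT M_def unfolding XP by (simp add: matrix_mul_assoc PP')
    also have "norm \<dots> \<le> norm (XP ** transpose XP ** E ** YK) * c"
      using norm_mult_right opXPT by metis
    also have "norm (XP ** transpose XP ** E ** YK) \<le> c^2 * e * norm YK"
      using norm_mult_left[of "XP ** transpose XP ** E" YK] opA
      by (meson mult_right_mono norm_ge_zero order_trans)
    finally have "norm T1 \<le> c^2 * e * norm YK * c" using c0 by (simp add: mult_right_mono)
    also have "\<dots> \<le> c^2 * e * (norm X * (op_norm W_K)^2) * c"
      using YK c0 e0 by (simp add: mult_right_mono mult_left_mono)
    finally show ?thesis by (simp add: power3_eq_cube power2_eq_square mult_ac)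
  qed
  have T2: "norm T2 \<le> c^3 * e * (norm X * (op_norm W_Q)^2)"
  proof -
    have "T2 = XP ** transpose YQ ** E ** (XP ** transpose XP)"
      unfolding T2_def YQ_def XPT M_def unfolding XP
      by (simp add: matrix_mul_assoc PP' matrix_transpose_mul PT)
    also have "norm \<dots> \<le> norm (XP ** transpose YQ ** E) * op_norm (XP ** transpose XP)"
      by (rule norm_mult_right)
    also have "op_norm (XP ** transpose XP) \<le> c * c"
      using op_mult[of XP "transpose XP"] opXPT c_def by simp
    also have "norm (XP ** transpose YQ ** E) \<le> norm (XP ** transpose YQ) * e"
      unfolding e_def by (rule norm_mult_right)
    also have "norm (XP ** transpose YQ) \<le> c * norm YQ"
      unfolding c_def using norm_mult_left[of XP "transpose YQ"] by (simp add: norm_transpose)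
    finally have "norm T2 \<le> c * norm YQ * e * (c * c)" using c0 e0
      by (simp add: mult_right_mono mult_left_mono mult_nonneg_nonneg)
    also have "\<dots> \<le> c * (norm X * (op_norm W_Q)^2) * e * (c * c)"
      using YQ c0 e0 by (simp add: mult_right_mono mult_left_mono)
    finally show ?thesis by (simp add: power3_eq_cube power2_eq_square mult_ac)
  qed
  have T3: "norm T3 \<le> c^4 * e^2 * (norm (X ** W_K) * norm (X ** W_Q))"
  proof -
    have "T3 = XP ** transpose XP ** E ** ((X ** W_K) ** transpose (X ** W_Q)) ** (E ** XP ** transpose XP)"
      unfolding T3_def XPT M_def unfolding XP
      by (simp add: matrix_mul_assoc PP' matrix_transpose_mul PT)
    also have "norm \<dots> \<le> norm (XP ** transpose XP ** E ** ((X ** W_K) ** transpose (X ** W_Q))) * (c^2 * e)"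
      by (rule order_trans[OF norm_mult_right mult_left_mono[OF opA' norm_ge_zero]])
    also have "norm (XP ** transpose XP ** E ** ((X ** W_K) ** transpose (X ** W_Q))) \<le> (c^2 * e) * norm ((X ** W_K) ** transpose (X ** W_Q))"
      by (rule order_trans[OF norm_mult_left mult_right_mono[OF opA norm_ge_zero]])
    also have "norm ((X ** W_K) ** transpose (X ** W_Q)) \<le> norm (X ** W_K) * norm (X ** W_Q)"
    proof -
      have "op_norm (transpose (X ** W_Q)) \<le> norm (X ** W_Q)"
        using op_le_norm[of "transpose (X ** W_Q)"] by (simp only: norm_transpose)
      then show ?thesis
        by (rule order_trans[OF norm_mult_right mult_left_mono[OF _ norm_ge_zero]])
    qed
    finally show ?thesis using c0 e0
      by (simp add: mult_right_mono mult_left_mono mult_nonneg_nonneg power4_eq_xxxx power2_eq_square mult_ac)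
  qed
  have s0: "0 \<le> s" unfolding s_def using dkpos by simp
  have a0: "0 \<le> a" and b0: "0 \<le> b" unfolding a_def b_def using eQ eK s0 by auto
  have s2: "s * s = 1 / dk" unfolding s_def using dkpos by (simp add: divide_simps)
  have s3: "s * s * s = 1 / dk powr (3/2)"
  proof -
    have "dk powr (3/2) = dk powr 1 * dk powr (1/2)" using powr_add[of dk 1 "1/2"] by simp
    also have "\<dots> = dk * sqrt dk" using dkpos by (simp add: powr_half_sqrt)
    finally show ?thesis unfolding s_def using dkpos by (simp add: divide_simps)
  qed
  have tri: "norm DZ \<le> s * b * norm T2 + s * a * norm T1 + s * (a * b) * norm T3"
  proof -
    have "norm DZ = s * norm (- (b *\<^sub>R T2) - a *\<^sub>R T1 + (a * b) *\<^sub>R T3)"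
      unfolding DZ' using s0 by simp
    also have "norm (- (b *\<^sub>R T2) - a *\<^sub>R T1 + (a * b) *\<^sub>R T3) \<le> b * norm T2 + a * norm T1 + (a * b) * norm T3"
    proof -
      have "norm (- (b *\<^sub>R T2) - a *\<^sub>R T1 + (a * b) *\<^sub>R T3) \<le> norm (- (b *\<^sub>R T2) - a *\<^sub>R T1) + norm ((a * b) *\<^sub>R T3)"
        by (rule norm_triangle_ineq)
      also have "norm (- (b *\<^sub>R T2) - a *\<^sub>R T1) \<le> norm (b *\<^sub>R T2) + norm (a *\<^sub>R T1)"
        by (metis norm_minus_cancel norm_triangle_ineq4)
      finally show ?thesis using a0 b0 by simp
    qed
    then have "s * norm (- (b *\<^sub>R T2) - a *\<^sub>R T1 + (a * b) *\<^sub>R T3) \<le> s * (b * norm T2 + a * norm T1 + (a * b) * norm T3)"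
      by (rule mult_left_mono[OF _ s0])
    finally show ?thesis by (simp add: algebra_simps)
  qed
  define x where "x = norm X"
  define wK where "wK = op_norm W_K"
  define wQ where "wQ = op_norm W_Q"
  define nK where "nK = norm (X ** W_K)"
  define nQ where "nQ = norm (X ** W_Q)"
  have x0: "0 \<le> x" and nK0: "0 \<le> nK" and nQ0: "0 \<le> nQ" unfolding x_def nK_def nQ_def by auto
  have c3: "c^3 \<le> c^2 * f" using mult_left_mono[OF cf, of "c^2"] c0 by (simp add: power3_eq_cube power2_eq_square mult_ac)
  have c4: "c^4 \<le> c^2 * f^2"
  proof -
    have "c^2 \<le> f^2" using cf c0 by (simp add: power_mono)
    then show ?thesis using mult_left_mono[of "c^2" "f^2" "c^2"] by (simp add: power4_eq_xxxx power2_eq_square mult_ac)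
  qed
  have T1': "norm T1 \<le> c^2 * f * e * (x * wK^2)"
    using T1 mult_right_mono[OF c3, of "e * (x * wK^2)"] e0 x0
    unfolding x_def wK_def by (simp add: mult_ac)
  have T2': "norm T2 \<le> c^2 * f * e * (x * wQ^2)"
    using T2 mult_right_mono[OF c3, of "e * (x * wQ^2)"] e0 x0
    unfolding x_def wQ_def by (simp add: mult_ac)
  have T3': "norm T3 \<le> c^2 * f^2 * e^2 * (nK * nQ)"
    using T3 mult_right_mono[OF c4, of "e^2 * (nK * nQ)"] nK0 nQ0
    unfolding nK_def nQ_def by (simp add: mult_ac)
  have sa: "s * a = eta_Q / dk" unfolding a_def using s2 by (simp add: mult_ac)
  have sb: "s * b = eta_K / dk" unfolding b_def using s2 by (simp add: mult_ac)
  have sab: "s * (a * b) = eta_Q * eta_K / dk powr (3/2)" unfolding a_def b_def using s3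
    by (simp add: mult_ac)
  have sa0: "0 \<le> s * a" and sb0: "0 \<le> s * b" and sab0: "0 \<le> s * (a * b)" using s0 a0 b0 by auto
  have "norm DZ \<le> s * b * (c^2 * f * e * (x * wQ^2)) + s * a * (c^2 * f * e * (x * wK^2))
        + s * (a * b) * (c^2 * f^2 * e^2 * (nK * nQ))"
    using tri mult_left_mono[OF T1' sa0] mult_left_mono[OF T2' sb0] mult_left_mono[OF T3' sab0]
    by linarith
  also have "\<dots> = e * x / dk * (eta_Q * wK^2 + eta_K * wQ^2) * c^2 * f + R2"
    unfolding sa sb sab R2 c_def[symmetric] e_def[symmetric] frob_eq_norm f_def[symmetric] nK_def[symmetric] nQ_def[symmetric]
    by (simp add: algebra_simps)
  finally show ?thesis
    unfolding frob_eq_norm c_def e_def f_def x_def wK_def wQ_def .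
qed

theorem corollary1:
  fixes X :: "real^'d^'n" and W_Q W_K :: "real^'k^'d" and E :: "real^'n^'n"
    and P :: "real^'d^'d" and eta_Q eta_K :: real
  assumes "orth_projector P" and "eta_Q \<ge> 0" and "eta_K \<ge> 0"
  shows "let dk = real CARD('k);
             B = W_Q ** transpose W_K;
             XP = X ** P;
             G_Q = (1 / sqrt dk) *\<^sub>R (transpose X ** E ** X ** W_K);
             G_K = (1 / sqrt dk) *\<^sub>R (transpose X ** transpose E ** X ** W_Q);
             Bp = (W_Q - eta_Q *\<^sub>R G_Q) ** transpose (W_K - eta_K *\<^sub>R G_K);
             DZ = (1 / sqrt dk) *\<^sub>R (XP ** P ** (Bp - B) ** P ** transpose XP);
             R2 = eta_Q * eta_K * (op_norm XP)^2 * (frob_norm XP)^2 * (op_norm E)^2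
                  * frob_norm (X ** W_K) * frob_norm (X ** W_Q) / dk powr (3/2)
         in frob_norm (X ** W_Q ** transpose W_Q ** P) \<le> frob_norm X * (op_norm W_Q)^2
          \<and> frob_norm (X ** W_K ** transpose W_K ** P) \<le> frob_norm X * (op_norm W_K)^2
          \<and> frob_norm DZ \<le> op_norm E * frob_norm X / dk
               * (eta_Q * (op_norm W_K)^2 + eta_K * (op_norm W_Q)^2)
               * (op_norm XP)^2 * frob_norm XP + R2"
    using main_bound[OF assms refl refl refl refl refl refl refl refl]
  unfolding Let_def frob_eq_norm first_part[OF assms(1)]
  using first_part[OF assms(1), of X W_Q] first_part[OF assms(1), of X W_K]
  by simp

end
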